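(* Consider Problem (P) (defined in the context) with objective $f_{Pa}$. Then Algorithm 2 (run with $\hat f_P=\hat f_{Pa}$) yields a solution $\mathcal{Y}_a^g$ satisfying $$f_{Pa}(\mathcal{Y}_a^g)\ge\frac{\min\{\gamma_2,1\}}{2}\big(1-e^{-\gamma_1}\big)f_{Pa}(\mathcal{Y}_a^\star)-\Big(\frac{B+c_{\max}}{c_{\min}}+1\Big)\varepsilon,$$ where $\mathcal{Y}_a^\star$ is an optimal solution to Problem (P), $\gamma_1,\gamma_2\ge0$ are the type-1 and type-2 greedy submodularity ratios of $f_{Pa}$, $c_{\min}=\min_{y\in\bar{\mathcal{M}}}c(y)$, $c_{\max}=\max_{y\in\bar{\mathcal{M}}}c(y)$, and $\varepsilon\ge0$ satisfies $|\hat f_{Pa}(\mathcal{Y})-f_{Pa}(\mathcal{Y})|\le\varepsilon/2$ for all $\mathcal{Y}\subseteq\bar{\mathcal{M}}$.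
   Context: Setting: networked SIR model on directed graph $\mathcal{G}=(\mathcal{V},\mathcal{E})$, $\mathcal{V}=[n]$, $\bar{\mathcal{N}}_i=\{j:(j,i)\in\mathcal{E}\}\cup\{i\}$, weights $a_{ij}\ge0$, sampling parameter $h$, dynamics $s_i[k+1]=s_i[k]-hs_i[k]\beta\sum_{j\in\bar{\mathcal{N}}_i}a_{ij}x_j[k]$, $x_i[k+1]=(1-h\delta)x_i[k]+hs_i[k]\beta\sum_{j\in\bar{\mathcal{N}}_i}a_{ij}x_j[k]$, $r_i[k+1]=r_i[k]+h\delta x_i[k]$, known initial condition, $\theta=[\beta\ \delta]^T$ with prior pdf $p(\theta)$; $x_i[k],r_i[k]\in[0,1)$ are viewed as functions of $\theta$. Given integers $1\le t_1\le t_2$ and, for each $i$, integers $N_i^x,N_i^r,\zeta_i,\eta_i\ge1$, and costs $c_{k,i},b_{k,i}>0$, budget $B\ge0$. Ground set $\bar{\mathcal{M}}=\{(\hat x_i[k],l):i\in\mathcal{V},k\in\{t_1,\dots,t_2\},l\in[\zeta_i]\}\cup\{(\hat r_i[k],l):i\in\mathcal{V},k\in\{t_1,\dots,t_2\},l\in[\eta_i]\}$, with $c((\hat x_i[k],l))=c_{k,i}$, $c((\hat r_i[k],l))=b_{k,i}$, $c(\mathcal{Y})=\sum_{y\in\mathcal{Y}}c(y)$. For $y=(\hat x_i[k],l)$, $H_y=\mathbb{E}_\theta\big[\frac{N_i^x}{x_i[k](1-x_i[k])}\frac{\partial x_i[k]}{\partial\theta}(\frac{\partial x_i[k]}{\partial\theta})^T\big]$,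 and for $y=(\hat r_i[k],l)$, $H_y=\mathbb{E}_\theta\big[\frac{N_i^r}{r_i[k](1-r_i[k])}\frac{\partial r_i[k]}{\partial\theta}(\frac{\partial r_i[k]}{\partial\theta})^T\big]$ (integrand taken as $0$ where the state is $0$); $\mathbb{E}_\theta$ is w.r.t. $p(\theta)$; $H_y\succeq0$. $H(\mathcal{Y})=\sum_{y\in\mathcal{Y}}H_y$. $F_p=\mathbb{E}_\theta[\nabla_\theta\ln p(\theta)\nabla_\theta\ln p(\theta)^T]\succ0$. $f_{Pa}(\mathcal{Y})=\mathrm{Tr}(F_p^{-1})-\mathrm{Tr}((F_p+H(\mathcal{Y}))^{-1})$. Problem (P): maximize $f_{Pa}(\mathcal{Y})$ over $\mathcal{Y}\subseteq\bar{\mathcal{M}}$ subject to $c(\mathcal{Y})\le B$. $\hat f_{Pa}$ is any set function with $\hat f_{Pa}(\emptyset)=0$ approximating $f_{Pa}$. Algorithm 2: (1) pick $\mathcal{Y}_1=\{y\}$ with $y\in\arg\max_{y\in\bar{\mathcal{M}}}\hat f_{Pa}(\{y\})$; (2) set $\mathcal{Y}_2=\emptyset$, $\mathcal{C}=\bar{\mathcal{M}}$; (3) while $\mathcal{C}\ne\emptyset$: choose $y^\star\in\arg\max_{y\in\mathcal{C}}\frac{\hat f_{Pa}(\{y\}\cup\mathcal{Y}_2)-\hat f_{Pa}(\mathcal{Y}_2)}{c(y)}$; if $c(y^\star)+c(\mathcal{Y}_2)\le B$ add $y^\star$ to $\mathcal{Y}_2$; remove $y^\star$ from $\mathcal{C}$;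 (4) output whichever of $\mathcal{Y}_1,\mathcal{Y}_2$ has larger $\hat f_{Pa}$ value. For this run, let $\mathcal{Y}_2^j$ be the set of the first $j$ elements added to $\mathcal{Y}_2$ ($\mathcal{Y}_2^0=\emptyset$). The type-1 greedy submodularity ratio $\gamma_1$ is the largest real with $\sum_{y\in\mathcal{A}\setminus\mathcal{Y}_2^j}(f_{Pa}(\{y\}\cup\mathcal{Y}_2^j)-f_{Pa}(\mathcal{Y}_2^j))\ge\gamma_1(f_{Pa}(\mathcal{A}\cup\mathcal{Y}_2^j)-f_{Pa}(\mathcal{Y}_2^j))$ for all $\mathcal{A}\subseteq\bar{\mathcal{M}}$ and $j\in\{0,\dots,|\mathcal{Y}_2|\}$. The type-2 greedy submodularity ratio $\gamma_2$ is the largest real with $f_{Pa}(\mathcal{Y}_1)-f_{Pa}(\emptyset)\ge\gamma_2(f_{Pa}(\{y\}\cup\mathcal{Y}_2^j)-f_{Pa}(\mathcal{Y}_2^j))$ for all $j\in\{0,\dots,|\mathcal{Y}_2|\}$ and all $y\in\bar{\mathcal{M}}\setminus\mathcal{Y}_2^j$ with $c(y)+c(\mathcal{Y}_2^j)>B$. *)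

theory Defs
  imports "HOL-Analysis.Analysis"
begin

definition nbhd :: "(nat \<times> nat) set \<Rightarrow> nat \<Rightarrow> nat set" where
  "nbhd E i = {j. (j, i) \<in> E} \<union> {i}"

text \<open>SIR E a h s0 x0 r0 theta k = (s[k], x[k], r[k]) (as functions of the node),
  for parameter theta = (beta, delta).\<close>
primrec SIR :: "(nat \<times> nat) set \<Rightarrow> (nat \<Rightarrow> nat \<Rightarrow> real) \<Rightarrow> real \<Rightarrow>
    (nat \<Rightarrow> real) \<Rightarrow> (nat \<Rightarrow> real) \<Rightarrow> (nat \<Rightarrow> real) \<Rightarrow> real \<times> real \<Rightarrow> nat \<Rightarrow>
    (nat \<Rightarrow> real) \<times> (nat \<Rightarrow> real) \<times> (nat \<Rightarrow> real)" where
  "SIR E a h s0 x0 r0 \<theta> 0 = (s0, x0, r0)"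
| "SIR E a h s0 x0 r0 \<theta> (Suc k) =
     (let (s, x, r) = SIR E a h s0 x0 r0 \<theta> k;
          \<beta> = fst \<theta>; \<delta> = snd \<theta>;
          inc = (\<lambda>i. h * s i * \<beta> * (\<Sum>j\<in>nbhd E i. a i j * x j))
      in (\<lambda>i. s i - inc i, \<lambda>i. (1 - h * \<delta>) * x i + inc i, \<lambda>i. r i + h * \<delta> * x i))"

definition grad2 :: "(real \<times> real \<Rightarrow> real) \<Rightarrow> real \<times> real \<Rightarrow> real^2" where
  "grad2 g \<theta> = (\<chi> m. if m = 1 then deriv (\<lambda>b. g (b, snd \<theta>)) (fst \<theta>)
                         else deriv (\<lambda>d. g (fst \<theta>, d)) (snd \<theta>))"

definition expect_mat :: "(real \<times> real \<Rightarrow> real) \<Rightarrow> (real \<times> real \<Rightarrow> real^2^2) \<Rightarrow> real^2^2" where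
  "expect_mat p G = (\<chi> u v. integral\<^sup>L lborel (\<lambda>\<theta>. p \<theta> * (G \<theta>) $ u $ v))"

text \<open>Single-measurement Fisher information matrix of a state z (as a function of theta) with N samples;
  the integrand is 0 where the state is 0.\<close>
definition fisher_state :: "(real \<times> real \<Rightarrow> real) \<Rightarrow> real \<Rightarrow> (real \<times> real \<Rightarrow> real) \<Rightarrow> real^2^2" where
  "fisher_state p N z = expect_mat p (\<lambda>\<theta>. \<chi> u v.
      (if z \<theta> = 0 then 0 else N / (z \<theta> * (1 - z \<theta>)) * (grad2 z \<theta>) $ u * (grad2 z \<theta>) $ v))"

definition prior_fisher :: "(real \<times> real \<Rightarrow> real) \<Rightarrow> real^2^2" where
  "prior_fisher p = expect_mat p (\<lambda>\<theta>. \<chi> u v. (grad2 (\<lambda>t. ln (p t)) \<theta>) $ u * (grad2 (\<lambda>t. ln (p t)) \<theta>) $ v)"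

text \<open>MX i k l = (hat x_i[k], l); MR i k l = (hat r_i[k], l).\<close>
datatype meas = MX nat nat nat | MR nat nat nat

definition ground_set :: "nat \<Rightarrow> nat \<Rightarrow> nat \<Rightarrow> (nat \<Rightarrow> nat) \<Rightarrow> (nat \<Rightarrow> nat) \<Rightarrow> meas set" where
  "ground_set n t1 t2 \<zeta> \<eta> =
     {MX i k l | i k l. i \<in> {1..n} \<and> k \<in> {t1..t2} \<and> l \<in> {1..\<zeta> i}} \<union>
     {MR i k l | i k l. i \<in> {1..n} \<and> k \<in> {t1..t2} \<and> l \<in> {1..\<eta> i}}"

definition meas_cost :: "(nat \<Rightarrow> nat \<Rightarrow> real) \<Rightarrow> (nat \<Rightarrow> nat \<Rightarrow> real) \<Rightarrow> meas \<Rightarrow> real" where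
  "meas_cost c b y = (case y of MX i k l \<Rightarrow> c k i | MR i k l \<Rightarrow> b k i)"

definition meas_H :: "(nat \<times> nat) set \<Rightarrow> (nat \<Rightarrow> nat \<Rightarrow> real) \<Rightarrow> real \<Rightarrow>
    (nat \<Rightarrow> real) \<Rightarrow> (nat \<Rightarrow> real) \<Rightarrow> (nat \<Rightarrow> real) \<Rightarrow> (real \<times> real \<Rightarrow> real) \<Rightarrow>
    (nat \<Rightarrow> nat) \<Rightarrow> (nat \<Rightarrow> nat) \<Rightarrow> meas \<Rightarrow> real^2^2" where
  "meas_H E a h s0 x0 r0 p Nx Nr y = (case y of
      MX i k l \<Rightarrow> fisher_state p (real (Nx i)) (\<lambda>\<theta>. fst (snd (SIR E a h s0 x0 r0 \<theta> k)) i)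
    | MR i k l \<Rightarrow> fisher_state p (real (Nr i)) (\<lambda>\<theta>. snd (snd (SIR E a h s0 x0 r0 \<theta> k)) i))"

definition f_Pa :: "real^2^2 \<Rightarrow> (meas \<Rightarrow> real^2^2) \<Rightarrow> meas set \<Rightarrow> real" where
  "f_Pa Fp H Y = trace (matrix_inv Fp) - trace (matrix_inv (Fp + (\<Sum>y\<in>Y. H y)))"

definition psd2 :: "real^2^2 \<Rightarrow> bool" where
  "psd2 M \<longleftrightarrow> transpose M = M \<and> (\<forall>v. 0 \<le> v \<bullet> (M *v v))"

definition pd2 :: "real^2^2 \<Rightarrow> bool" where
  "pd2 M \<longleftrightarrow> transpose M = M \<and> (\<forall>v. v \<noteq> 0 \<longrightarrow> 0 < v \<bullet> (M *v v))"

definition greedy_step :: "('a \<Rightarrow> real) \<Rightarrow> real \<Rightarrow> 'a list \<Rightarrow> 'a \<Rightarrow> 'a list" where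
  "greedy_step c B L y = (if c y + (\<Sum>z\<in>set L. c z) \<le> B then L @ [y] else L)"

definition greedy_added :: "('a \<Rightarrow> real) \<Rightarrow> real \<Rightarrow> 'a list \<Rightarrow> 'a list" where
  "greedy_added c B ys = foldl (greedy_step c B) [] ys"

text \<open>ys is a valid run of the while-loop of Algorithm 2: ys lists the order in which the candidates
  y* are picked (and removed from C); each pick maximizes the marginal-gain/cost ratio over the
  remaining candidates, with respect to the current Y_2.\<close>
definition greedy_run :: "('a set \<Rightarrow> real) \<Rightarrow> ('a \<Rightarrow> real) \<Rightarrow> real \<Rightarrow> 'a set \<Rightarrow> 'a list \<Rightarrow> bool" where
  "greedy_run fh c B M ys \<longleftrightarrow> distinct ys \<and> set ys = M \<and>
     (\<forall>t < length ys.
        let Y = set (greedy_added c B (take t ys)) in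
        \<forall>y \<in> M - set (take t ys).
          (fh (insert y Y) - fh Y) / c y \<le> (fh (insert (ys ! t) Y) - fh Y) / c (ys ! t))"

definition alg2_output :: "('a set \<Rightarrow> real) \<Rightarrow> ('a \<Rightarrow> real) \<Rightarrow> real \<Rightarrow> 'a set \<Rightarrow> 'a set \<Rightarrow> 'a set \<Rightarrow> 'a list \<Rightarrow> bool" where
  "alg2_output fh c B M Y Y1 ys \<longleftrightarrow>
     (\<exists>y1 \<in> M. Y1 = {y1} \<and> (\<forall>y \<in> M. fh {y} \<le> fh {y1})) \<and>
     greedy_run fh c B M ys \<and>
     (let Y2 = set (greedy_added c B ys) in
        Y \<in> {Y1, Y2} \<and> fh Y1 \<le> fh Y \<and> fh Y2 \<le> fh Y)"

definition gamma1_ineq :: "('a set \<Rightarrow> real) \<Rightarrow> 'a set \<Rightarrow> 'a list \<Rightarrow> real \<Rightarrow> bool" where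
  "gamma1_ineq f M L \<gamma> \<longleftrightarrow> (\<forall>A \<subseteq> M. \<forall>j \<le> length L.
      let Yj = set (take j L) in
      (\<Sum>y \<in> A - Yj. f (insert y Yj) - f Yj) \<ge> \<gamma> * (f (A \<union> Yj) - f Yj))"

definition is_gamma1 :: "('a set \<Rightarrow> real) \<Rightarrow> 'a set \<Rightarrow> 'a list \<Rightarrow> real \<Rightarrow> bool" where
  "is_gamma1 f M L \<gamma> \<longleftrightarrow> gamma1_ineq f M L \<gamma> \<and> (\<forall>\<gamma>'. gamma1_ineq f M L \<gamma>' \<longrightarrow> \<gamma>' \<le> \<gamma>)"

definition gamma2_ineq :: "('a set \<Rightarrow> real) \<Rightarrow> ('a \<Rightarrow> real) \<Rightarrow> real \<Rightarrow> 'a set \<Rightarrow> 'a set \<Rightarrow> 'a list \<Rightarrow> real \<Rightarrow> bool" where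
  "gamma2_ineq f c B M Y1 L \<gamma> \<longleftrightarrow> (\<forall>j \<le> length L.
      let Yj = set (take j L) in
      \<forall>y \<in> M - Yj. c y + (\<Sum>z\<in>Yj. c z) > B \<longrightarrow>
        f Y1 - f {} \<ge> \<gamma> * (f (insert y Yj) - f Yj))"

definition is_gamma2 :: "('a set \<Rightarrow> real) \<Rightarrow> ('a \<Rightarrow> real) \<Rightarrow> real \<Rightarrow> 'a set \<Rightarrow> 'a set \<Rightarrow> 'a list \<Rightarrow> real \<Rightarrow> bool" where
  "is_gamma2 f c B M Y1 L \<gamma> \<longleftrightarrow> gamma2_ineq f c B M Y1 L \<gamma> \<and>
     (\<forall>\<gamma>'. gamma2_ineq f c B M Y1 L \<gamma>' \<longrightarrow> \<gamma>' \<le> \<gamma>)"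

end

theory Submission
  imports Defs
begin


lemma qf2: fixes M :: "real^2^2"
  shows "(vector [x, y] :: real^2) \<bullet> (M *v vector [x, y]) = M$1$1*x*x + (M$1$2 + M$2$1)*x*y + M$2$2*y*y"
  by (simp add: inner_vec_def sum_2 matrix_vector_mult_def algebra_simps)

lemma sym2: "transpose M = M \<Longrightarrow> M$1$2 = M$2$1"
  by (metis transpose_def vec_lambda_beta)

lemma vec2_nz: "(vector [x, y] :: real^2) \<noteq> 0 \<longleftrightarrow> x \<noteq> 0 \<or> y \<noteq> 0"
  by (auto simp: vec_eq_iff forall_2)

lemma pd2_facts:
  assumes "pd2 A"
  shows "A$1$1 > 0" "A$2$2 > 0" "det A > 0" "A$1$2 = A$2$1"
proof -
  have s: "A$1$2 = A$2$1" using assms sym2 pd2_def by blast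
  have q: "\<And>x y. x \<noteq> 0 \<or> y \<noteq> 0 \<Longrightarrow> 0 < A$1$1*x*x + (A$1$2 + A$2$1)*x*y + A$2$2*y*y"
    using assms unfolding pd2_def by (metis qf2 vec2_nz)
  show a: "A$1$1 > 0" using q[of 1 0] by simp
  show "A$2$2 > 0" using q[of 0 1] by simp
  have "0 < A$1$1*(A$2$2)*(A$2$2) + (A$1$2 + A$2$1)*(A$2$2)*(- A$1$2) + A$2$2*(- A$1$2)*(- A$1$2)"
    using q[of "A$2$2" "- A$1$2"] \<open>A$2$2 > 0\<close> by simp
  then have "0 < A$2$2 * (A$1$1*A$2$2 - A$1$2*A$2$1)" using s by (simp add: algebra_simps)
  then show "det A > 0" using \<open>A$2$2 > 0\<close> by (simp add: det_2 zero_less_mult_iff)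
  show "A$1$2 = A$2$1" by (fact s)
qed

lemma psd2_facts:
  assumes "psd2 A"
  shows "\<And>x y. 0 \<le> A$1$1*x*x + 2*A$1$2*x*y + A$2$2*y*y" "A$1$2 = A$2$1"
proof -
  have s: "A$1$2 = A$2$1" using assms sym2 psd2_def by blast
  show "\<And>x y. 0 \<le> A$1$1*x*x + 2*A$1$2*x*y + A$2$2*y*y"
    using assms s unfolding psd2_def by (metis qf2 mult_2)
  show "A$1$2 = A$2$1" by (fact s)
qed

lemma pd2_add: "pd2 A \<Longrightarrow> psd2 D \<Longrightarrow> pd2 (A + D)"
  unfolding pd2_def psd2_def
  by (auto simp: transpose_def vec_eq_iff matrix_vector_mult_add_rdistrib inner_add_right add_pos_nonneg)

lemma psd2_sum: "(\<And>y. y \<in> Y \<Longrightarrow> psd2 (H y)) \<Longrightarrow> psd2 (\<Sum>y\<in>Y. H y)"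
proof (induction Y rule: infinite_finite_induct)
  case (infinite A) then show ?case by (simp add: psd2_def transpose_def vec_eq_iff)
next
  case empty then show ?case by (simp add: psd2_def transpose_def vec_eq_iff)
next
  case (insert x F)
  then have a: "psd2 (H x)" and b: "psd2 (\<Sum>y\<in>F. H y)" by auto
  show ?case using insert(1,2) a b unfolding psd2_def
    by (auto simp: transpose_def vec_eq_iff matrix_vector_mult_add_rdistrib inner_add_right)
qed

lemma trace_inv2:
  fixes A :: "real^2^2"
  assumes d: "det A \<noteq> 0"
  shows "trace (matrix_inv A) = (A$1$1 + A$2$2) / det A"
proof -
  define X :: "real^2^2" where "X = (\<chi> i j. if i = 1 \<and> j = 1 then A$2$2 / det A
     else if i = 1 \<and> j = 2 then - A$1$2 / det A else if i = 2 \<and> j = 1 then - A$2$1 / det A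
     else A$1$1 / det A)"
  have dd: "det A = A$1$1 * A$2$2 - A$1$2 * A$2$1" by (rule det_2)
  have AX: "A ** X = mat 1" using d
    by (simp add: vec_eq_iff forall_2 matrix_matrix_mult_def sum_2 X_def mat_def diff_divide_distrib[symmetric] add_divide_distrib[symmetric]) (simp_all add: dd algebra_simps)
  have XA: "X ** A = mat 1" using d
    by (simp add: vec_eq_iff forall_2 matrix_matrix_mult_def sum_2 X_def mat_def diff_divide_distrib[symmetric] add_divide_distrib[symmetric]) (simp_all add: dd algebra_simps)
  have "A ** matrix_inv A = mat 1 \<and> matrix_inv A ** A = mat 1"
    unfolding matrix_inv_def by (rule someI[of _ X]) (use AX XA in auto)
  then have "matrix_inv A = X"
    by (metis XA matrix_mul_assoc matrix_mul_lid matrix_mul_rid)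
  then show ?thesis by (simp add: trace_def sum_2 X_def add_divide_distrib)
qed



lemma trace_inv_mono:
  fixes A D :: "real^2^2"
  assumes A: "pd2 A" and D: "psd2 D"
  shows "trace (matrix_inv (A + D)) \<le> trace (matrix_inv A)"
proof -
  have AD: "pd2 (A + D)" using A D by (rule pd2_add)
  note fa = pd2_facts[OF A] and fad = pd2_facts[OF AD] and fd = psd2_facts[OF D]
  define a where "a = A$1$1" define bb where "bb = A$1$2" define d where "d = A$2$2"
  define p where "p = D$1$1" define q where "q = D$1$2" define r where "r = D$2$2"
  have dA: "det A = a*d - bb*bb" using fa(4) by (simp add: det_2 a_def bb_def d_def)
  have dAD: "det (A+D) = (a+p)*(d+r) - (bb+q)*(bb+q)" using fa(4) fd(2)
    by (simp add: det_2 a_def bb_def d_def p_def q_def r_def)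
  have pos1: "a*d - bb*bb > 0" using fa(3) dA by simp
  have pos2: "(a+p)*(d+r) - (bb+q)*(bb+q) > 0" using fad(3) dAD by simp
  have ha: "a > 0" "d > 0" using fa a_def d_def by auto
  have p0: "p \<ge> 0" "r \<ge> 0" using fd(1)[of 1 0] fd(1)[of 0 1] by (auto simp: p_def r_def)
  have pr: "p*r - q*q \<ge> 0"
  proof (cases "p = 0")
    case True
    have "0 \<le> p*(r+1)*(r+1) + 2*q*(r+1)*(-q) + r*(-q)*(-q)" using fd(1)[of "r+1" "-q"] by (simp add: p_def q_def r_def)
    then have "0 \<le> - (q*q) * (r+2)" using True by (simp add: algebra_simps)
    then have "q*q \<le> 0" using p0 by (simp add: mult_le_0_iff)
    then show ?thesis using True by simp
  next
    case False
    have "0 \<le> p*(-q)*(-q) + 2*q*(-q)*p + r*p*p" using fd(1)[of "-q" p] by (simp add: p_def q_def r_def)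
    then have "0 \<le> p * (p*r - q*q)" by (simp add: algebra_simps)
    then show ?thesis using False p0 by (simp add: zero_le_mult_iff)
  qed
  have k1: "0 \<le> p*bb*bb + 2*q*bb*(-a) + r*(-a)*(-a)" using fd(1)[of bb "-a"] by (simp add: p_def q_def r_def)
  have k2: "0 \<le> p*d*d + 2*q*d*(-bb) + r*(-bb)*(-bb)" using fd(1)[of d "-bb"] by (simp add: p_def q_def r_def)
  have key: "(a+d+p+r)*(a*d - bb*bb) \<le> (a+d)*((a+p)*(d+r) - (bb+q)*(bb+q))"
  proof -
    have "(a+d)*((a+p)*(d+r) - (bb+q)*(bb+q)) - (a+d+p+r)*(a*d - bb*bb)
       = (a+d)*(p*r - q*q) + (p*bb*bb + 2*q*bb*(-a) + r*(-a)*(-a)) + (p*d*d + 2*q*d*(-bb) + r*(-bb)*(-bb))"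
      by (simp add: algebra_simps)
    also have "\<dots> \<ge> 0" using k1 k2 pr ha by simp
    finally show ?thesis by simp
  qed
  have "trace (matrix_inv (A + D)) = (a+d+p+r) / ((a+p)*(d+r) - (bb+q)*(bb+q))"
    using trace_inv2[of "A+D"] fad(3) dAD by (simp add: a_def d_def p_def r_def algebra_simps)
  also have "\<dots> \<le> (a+d) / (a*d - bb*bb)"
    using key pos1 pos2 by (simp add: divide_simps)
  also have "\<dots> = trace (matrix_inv A)" using trace_inv2[of A] fa(3) dA by (simp add: a_def d_def)
  finally show ?thesis .
qed



lemma step_lemma:
  fixes f fh :: "'a set \<Rightarrow> real" and c :: "'a \<Rightarrow> real"
  assumes finM: "finite M" and SM: "S \<subseteq> M" and gM: "g \<in> M" and gS: "g \<notin> S"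
    and optM: "Ystar \<subseteq> M" and optB: "sum c Ystar \<le> B" and Bpos: "0 < B"
    and cmin: "0 < cmin" "\<forall>y\<in>M. cmin \<le> c y"
    and mono: "\<forall>S T. S \<subseteq> T \<and> T \<subseteq> M \<longrightarrow> f S \<le> f T"
    and eps: "0 \<le> \<epsilon>" "\<forall>Y \<subseteq> M. \<bar>fh Y - f Y\<bar> \<le> \<epsilon> / 2"
    and g0: "0 \<le> \<gamma>1"
    and cand: "\<forall>y\<in>Ystar - S. (fh (insert y S) - fh S) / c y \<le> (fh (insert g S) - fh S) / c g"
    and g1: "\<gamma>1 * (f (Ystar \<union> S) - f S) \<le> (\<Sum>y\<in>Ystar - S. f (insert y S) - f S)"
    and IH: "f Ystar - f S \<le> exp (- \<gamma>1 * sum c S / B) * f Ystar + \<epsilon> * (card S + sum c S / cmin)"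
    and F0: "0 \<le> f Ystar"
  shows "f Ystar - f (insert g S) \<le> exp (- \<gamma>1 * sum c (insert g S) / B) * f Ystar
           + \<epsilon> * (card (insert g S) + sum c (insert g S) / cmin)"
proof -
  have finS: "finite S" using finM SM finite_subset by blast
  have finO: "finite Ystar" using finM optM finite_subset by blast
  define F where "F = f Ystar"
  define \<Delta> where "\<Delta> = f (insert g S) - f S"
  define cg where "cg = c g"
  define D where "D = F - f S"
  have cgpos: "0 < cg" using cmin gM cg_def by force
  have monoR: "\<And>S T. S \<subseteq> T \<Longrightarrow> T \<subseteq> M \<Longrightarrow> f S \<le> f T" using mono by blast
  have "f S \<le> f (insert g S)" by (rule monoR) (use SM gM in auto)
  then have \<Delta>0: "0 \<le> \<Delta>" unfolding \<Delta>_def by simp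
  have appr: "\<And>Y. Y \<subseteq> M \<Longrightarrow> \<bar>fh Y - f Y\<bar> \<le> \<epsilon> / 2" using eps by blast
  have hg: "fh (insert g S) - fh S \<le> \<Delta> + \<epsilon>"
  proof -
    have a1: "\<bar>fh (insert g S) - f (insert g S)\<bar> \<le> \<epsilon> / 2" by (rule appr) (use SM gM in auto)
    have a2: "\<bar>fh S - f S\<bar> \<le> \<epsilon> / 2" by (rule appr[OF SM])
    show ?thesis using a1 a2 unfolding abs_le_iff \<Delta>_def by linarith
  qed
  have each: "f (insert y S) - f S \<le> c y * ((\<Delta> + \<epsilon>) / cg) + \<epsilon>" if y: "y \<in> Ystar - S" for y
  proof -
    have yM: "y \<in> M" using y optM by auto
    have cy: "0 < c y" using cmin yM by force
    have "(fh (insert y S) - fh S) / c y \<le> (\<Delta> + \<epsilon>) / cg"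
      using cand y hg cgpos cg_def by (meson divide_right_mono less_imp_le order_trans)
    then have "fh (insert y S) - fh S \<le> c y * ((\<Delta> + \<epsilon>) / cg)" using pos_divide_le_eq[OF cy] by (metis mult.commute)
    moreover have "f (insert y S) - f S \<le> fh (insert y S) - fh S + \<epsilon>"
    proof -
      have a1: "\<bar>fh (insert y S) - f (insert y S)\<bar> \<le> \<epsilon> / 2" by (rule appr) (use SM yM in auto)
      have a2: "\<bar>fh S - f S\<bar> \<le> \<epsilon> / 2" by (rule appr[OF SM])
      show ?thesis using a1 a2 unfolding abs_le_iff by linarith
    qed
    ultimately show ?thesis by linarith
  qed
  have sumb: "(\<Sum>y\<in>Ystar - S. f (insert y S) - f S) \<le> (\<Sum>y\<in>Ystar - S. c y * ((\<Delta> + \<epsilon>) / cg) + \<epsilon>)"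
    by (rule sum_mono) (use each in auto)
  also have "\<dots> = sum c (Ystar - S) * ((\<Delta> + \<epsilon>) / cg) + card (Ystar - S) * \<epsilon>"
    by (simp add: sum.distrib sum_distrib_right[symmetric] sum_divide_distrib[symmetric])
  also have "\<dots> \<le> B * ((\<Delta> + \<epsilon>) / cg) + (B / cmin) * \<epsilon>"
  proof (rule add_mono)
    have "sum c (Ystar - S) \<le> sum c Ystar"
      by (rule sum_mono2) (use finO cmin optM in force)+
    then show "sum c (Ystar - S) * ((\<Delta> + \<epsilon>) / cg) \<le> B * ((\<Delta> + \<epsilon>) / cg)"
      using optB \<Delta>0 eps(1) cgpos by (intro mult_right_mono) auto
    have "real (card Ystar) * cmin \<le> sum c Ystar"
      by (rule sum_bounded_below) (use cmin optM in auto)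
    then have "real (card Ystar) \<le> B / cmin" using optB cmin by (simp add: divide_simps)
    moreover have "card (Ystar - S) \<le> card Ystar" using finO by (simp add: card_mono)
    ultimately have "real (card (Ystar - S)) \<le> B / cmin" by linarith
    then show "card (Ystar - S) * \<epsilon> \<le> (B / cmin) * \<epsilon>" using eps(1) by (intro mult_right_mono) auto
  qed
  finally have s1: "(\<Sum>y\<in>Ystar - S. f (insert y S) - f S) \<le> B * ((\<Delta> + \<epsilon>) / cg) + (B / cmin) * \<epsilon>" .
  have "f Ystar \<le> f (Ystar \<union> S)" by (rule monoR) (use optM SM in auto)
  then have "\<gamma>1 * D \<le> \<gamma>1 * (f (Ystar \<union> S) - f S)" using g0 unfolding D_def F_def
    by (intro mult_left_mono) auto
  with g1 s1 have gD: "\<gamma>1 * D \<le> B * ((\<Delta> + \<epsilon>) / cg) + (B / cmin) * \<epsilon>" by linarith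
  define x where "x = cg / B"
  have x0: "0 < x" using cgpos Bpos x_def by simp
  have "\<gamma>1 * x * D \<le> x * (B * ((\<Delta> + \<epsilon>) / cg) + (B / cmin) * \<epsilon>)"
    using gD x0 by (simp add: mult.assoc mult.left_commute)
  also have "\<dots> = \<Delta> + \<epsilon> + (cg / cmin) * \<epsilon>"
    using cgpos Bpos cmin unfolding x_def by (simp add: field_simps)
  finally have rec: "D - \<Delta> \<le> (1 - \<gamma>1 * x) * D + (\<epsilon> + (cg / cmin) * \<epsilon>)"
    by (simp add: algebra_simps)
  define P where "P = exp (- \<gamma>1 * sum c S / B) * F"
  define E0 where "E0 = \<epsilon> * (card S + sum c S / cmin)"
  have P0: "0 \<le> P" using F0 P_def F_def by simp
  have sumS0: "0 \<le> sum c S" using cmin SM by (intro sum_nonneg) force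
  have E00: "0 \<le> E0" using eps(1) cmin sumS0 E0_def by simp
  have IH': "D \<le> P + E0" using IH unfolding D_def P_def E0_def F_def .
  have e0: "0 \<le> \<epsilon> + (cg / cmin) * \<epsilon>" using eps(1) cgpos cmin by simp
  have ex: "1 - \<gamma>1 * x \<le> exp (- \<gamma>1 * x)" using exp_ge_add_one_self[of "- \<gamma>1 * x"] by simp
  have main: "D - \<Delta> \<le> exp (- \<gamma>1 * x) * P + E0 + (\<epsilon> + (cg / cmin) * \<epsilon>)"
  proof (cases "D < 0")
    case True
    have "0 \<le> exp (- \<gamma>1 * x) * P" using P0 by simp
    then show ?thesis using True \<Delta>0 E00 e0 by linarith
  next
    case Dn: False
    show ?thesis
    proof (cases "1 - \<gamma>1 * x < 0")
      case True
      then have "(1 - \<gamma>1 * x) * D \<le> 0" using Dn by (simp add: mult_nonpos_nonneg)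
      moreover have "0 \<le> exp (- \<gamma>1 * x) * P" using P0 by simp
      ultimately show ?thesis using rec E00 by linarith
    next
      case False
      then have "(1 - \<gamma>1 * x) * D \<le> (1 - \<gamma>1 * x) * (P + E0)" using IH' by (intro mult_left_mono) auto
      also have "\<dots> = (1 - \<gamma>1 * x) * P + (1 - \<gamma>1 * x) * E0" by (simp add: algebra_simps)
      also have "\<dots> \<le> exp (- \<gamma>1 * x) * P + E0"
      proof (rule add_mono)
        show "(1 - \<gamma>1 * x) * P \<le> exp (- \<gamma>1 * x) * P" using ex P0 by (rule mult_right_mono)
        have "1 - \<gamma>1 * x \<le> 1" using g0 x0 by simp
        then show "(1 - \<gamma>1 * x) * E0 \<le> E0" using E00 False by (intro mult_left_le_one_le) auto
      qed
      finally show ?thesis using rec by linarith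
    qed
  qed
  have cins: "sum c (insert g S) = sum c S + cg" using finS gS cg_def by simp
  have kins: "card (insert g S) = card S + 1" using finS gS by simp
  have "exp (- \<gamma>1 * sum c (insert g S) / B) = exp (- \<gamma>1 * sum c S / B) * exp (- \<gamma>1 * x)"
  proof -
    have "- \<gamma>1 * sum c (insert g S) / B = - \<gamma>1 * sum c S / B + - \<gamma>1 * x"
      unfolding cins x_def using Bpos by (simp add: field_simps)
    then show ?thesis by (metis exp_add)
  qed
  then have "exp (- \<gamma>1 * sum c (insert g S) / B) * f Ystar = exp (- \<gamma>1 * x) * P"
    unfolding P_def F_def by simp
  moreover have "\<epsilon> * (card (insert g S) + sum c (insert g S) / cmin) = E0 + (\<epsilon> + (cg / cmin) * \<epsilon>)"
    unfolding kins cins E0_def using cmin by (simp add: field_simps)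
  moreover have "f Ystar - f (insert g S) = D - \<Delta>" unfolding D_def \<Delta>_def F_def by simp
  ultimately show ?thesis using main by simp
qed



lemma foldl_gs_prefix: "\<exists>R. foldl (greedy_step c B) L xs = L @ R"
proof (induction xs arbitrary: L)
  case Nil then show ?case by simp
next
  case (Cons x xs)
  obtain R where "foldl (greedy_step c B) (greedy_step c B L x) xs = greedy_step c B L x @ R"
    using Cons by blast
  moreover have "\<exists>R'. greedy_step c B L x = L @ R'" by (simp add: greedy_step_def)
  ultimately show ?case by (metis append_assoc foldl_Cons)
qed

lemma foldl_gs_set: "set (foldl (greedy_step c B) L xs) \<subseteq> set L \<union> set xs"
proof (induction xs arbitrary: L)
  case Nil then show ?case by simp
next
  case (Cons x xs)
  have "set (greedy_step c B L x) \<subseteq> set L \<union> {x}" by (auto simp: greedy_step_def)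
  then show ?case using Cons[of "greedy_step c B L x"] by auto
qed

lemma ga_set: "set (greedy_added c B xs) \<subseteq> set xs"
  using foldl_gs_set[of c B "[]" xs] by (simp add: greedy_added_def)

lemma ga_prefix: "s \<le> t \<Longrightarrow> \<exists>R. greedy_added c B (take t ys) = greedy_added c B (take s ys) @ R"
proof -
  assume st: "s \<le> t"
  have "take t ys = take s ys @ take (t - s) (drop s ys)"
    using take_add[of s "t - s" ys] st by simp
  then have "greedy_added c B (take t ys) = foldl (greedy_step c B) (greedy_added c B (take s ys)) (take (t - s) (drop s ys))"
    unfolding greedy_added_def by simp
  then show ?thesis using foldl_gs_prefix by metis
qed

lemma ga_prefix_full: "\<exists>R. greedy_added c B ys = greedy_added c B (take t ys) @ R"
proof -
  have "greedy_added c B ys = greedy_added c B (take t ys @ drop t ys)" by simp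
  also have "\<dots> = foldl (greedy_step c B) (greedy_added c B (take t ys)) (drop t ys)"
    unfolding greedy_added_def by (simp only: foldl_append)
  finally show ?thesis using foldl_gs_prefix by metis
qed

lemma ga_Suc: "t < length ys \<Longrightarrow> greedy_added c B (take (Suc t) ys) =
   greedy_step c B (greedy_added c B (take t ys)) (ys ! t)"
  unfolding greedy_added_def by (simp only: take_Suc_conv_app_nth foldl_append foldl_Cons foldl_Nil)

lemma nth_notin_take: "distinct ys \<Longrightarrow> t < length ys \<Longrightarrow> ys ! t \<notin> set (take t ys)"
proof -
  assume d: "distinct ys" and t: "t < length ys"
  have "distinct (take t ys @ [ys ! t])" using distinct_take[OF d, of "Suc t"] t
    by (simp only: take_Suc_conv_app_nth)
  then show ?thesis by simp
qed



lemma abstract_main: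
  fixes f fh :: "'a set \<Rightarrow> real" and c :: "'a \<Rightarrow> real"
  assumes finM: "finite M" and Mne: "M \<noteq> {}" and cpos: "\<forall>y\<in>M. 0 < c y"
    and mono: "\<forall>S T. S \<subseteq> T \<and> T \<subseteq> M \<longrightarrow> f S \<le> f T" and f0: "f {} = 0"
    and budget: "0 \<le> B"
    and eps: "0 \<le> \<epsilon>" "\<forall>Y \<subseteq> M. \<bar>fh Y - f Y\<bar> \<le> \<epsilon> / 2"
    and run: "alg2_output fh c B M Yg Y1 ys"
    and opt: "Ystar \<subseteq> M" "sum c Ystar \<le> B"
    and g1: "gamma1_ineq f M (greedy_added c B ys) \<gamma>1"
    and g2: "gamma2_ineq f c B M Y1 (greedy_added c B ys) \<gamma>2"
    and gn: "0 \<le> \<gamma>1" "0 \<le> \<gamma>2"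
  shows "f Yg \<ge> min \<gamma>2 1 / 2 * (1 - exp (- \<gamma>1)) * f Ystar
            - ((B + Max (c ` M)) / Min (c ` M) + 1) * \<epsilon>"
proof -
  define L where "L = greedy_added c B ys"
  define Y2 where "Y2 = set L"
  define G where "G t = set (greedy_added c B (take t ys))" for t
  define cmin where "cmin = Min (c ` M)"
  define cmax where "cmax = Max (c ` M)"
  define F where "F = f Ystar"
  define m where "m = min \<gamma>2 1"
  define K where "K = (B + cmax) / cmin"
  from run obtain y1 where y1: "y1 \<in> M" "Y1 = {y1}" and gr: "greedy_run fh c B M ys"
     and Yg: "Yg \<in> {Y1, Y2}" "fh Y1 \<le> fh Yg" "fh Y2 \<le> fh Yg"
    unfolding alg2_output_def Y2_def L_def Let_def by blast
  from gr have dist: "distinct ys" and setys: "set ys = M"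
    unfolding greedy_run_def by auto
  have cand: "\<And>t y. t < length ys \<Longrightarrow> y \<in> M - set (take t ys) \<Longrightarrow>
      (fh (insert y (G t)) - fh (G t)) / c y \<le> (fh (insert (ys!t) (G t)) - fh (G t)) / c (ys!t)"
    using gr unfolding greedy_run_def G_def Let_def by blast
  have monoR: "\<And>S T. S \<subseteq> T \<Longrightarrow> T \<subseteq> M \<Longrightarrow> f S \<le> f T" using mono by blast
  have cmin_pos: "0 < cmin" using finM Mne cpos unfolding cmin_def by auto
  have cmin_le: "\<forall>y\<in>M. cmin \<le> c y" using finM unfolding cmin_def by auto
  have cmax_ge: "\<forall>y\<in>M. c y \<le> cmax" using finM unfolding cmax_def by auto
  have appr: "\<And>Y. Y \<subseteq> M \<Longrightarrow> \<bar>fh Y - f Y\<bar> \<le> \<epsilon> / 2" using eps by blast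
  have F0: "0 \<le> F" using monoR[of "{}" Ystar] opt f0 unfolding F_def by simp
  have Y2M: "Y2 \<subseteq> M" using ga_set[of c B ys] setys unfolding Y2_def L_def by blast
  have Y1M: "Y1 \<subseteq> M" using y1 by simp
  have YgM: "Yg \<subseteq> M" using Yg(1) Y1M Y2M by auto
  have fY1: "0 \<le> f Y1" using monoR[of "{}" Y1] Y1M f0 by simp
  have fY2: "0 \<le> f Y2" using monoR[of "{}" Y2] Y2M f0 by simp
  have W1: "f Y1 - \<epsilon> \<le> f Yg"
    using appr[OF Y1M] appr[OF YgM] Yg(2) unfolding abs_le_iff by linarith
  have W2: "f Y2 - \<epsilon> \<le> f Yg"
    using appr[OF Y2M] appr[OF YgM] Yg(3) unfolding abs_le_iff by linarith
  have cmax_pos: "0 < cmax" using Mne cmin_pos cmin_le cmax_ge by force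
  have K0: "0 \<le> K" unfolding K_def using budget cmax_pos cmin_pos by simp
  have m01: "0 \<le> m" "m \<le> 1" unfolding m_def using gn by auto
  have e01: "0 \<le> 1 - exp (- \<gamma>1)" "1 - exp (- \<gamma>1) \<le> 1" using gn by auto
  have G0: "G 0 = {}" unfolding G_def greedy_added_def by simp
  have GSuc: "\<And>t. t < length ys \<Longrightarrow> G (Suc t) =
      (if c (ys!t) + sum c (G t) \<le> B then insert (ys!t) (G t) else G t)"
  proof -
    fix t assume t: "t < length ys"
    show "G (Suc t) = (if c (ys!t) + sum c (G t) \<le> B then insert (ys!t) (G t) else G t)"
      unfolding G_def ga_Suc[OF t] greedy_step_def by simp
  qed
  have Gsub: "\<And>t. G t \<subseteq> set (take t ys)" unfolding G_def by (rule ga_set)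
  have GM: "\<And>t. G t \<subseteq> M"
  proof -
    fix t show "G t \<subseteq> M" using Gsub[of t] set_take_subset[of t ys] setys by simp
  qed
  have finG: "\<And>t. finite (G t)" using GM finM by (meson finite_subset)
  have Gmono: "\<And>s t. s \<le> t \<Longrightarrow> G s \<subseteq> G t"
  proof -
    fix s t :: nat assume st: "s \<le> t"
    obtain R where "greedy_added c B (take t ys) = greedy_added c B (take s ys) @ R"
      using ga_prefix[OF st] by blast
    then show "G s \<subseteq> G t" by (simp add: G_def)
  qed
  have GY2: "\<And>t. G t \<subseteq> Y2"
  proof -
    fix t
    obtain R where "greedy_added c B ys = greedy_added c B (take t ys) @ R"
      using ga_prefix_full by blast
    then show "G t \<subseteq> Y2" by (simp add: G_def Y2_def L_def)
  qed
  have Gpref: "\<And>t. \<exists>j \<le> length L. G t = set (take j L)"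
  proof -
    fix t
    obtain R where R: "L = greedy_added c B (take t ys) @ R"
      using ga_prefix_full L_def by blast
    show "\<exists>j \<le> length L. G t = set (take j L)"
      by (rule exI[of _ "length (greedy_added c B (take t ys))"]) (simp add: R G_def)
  qed
  have notinG: "\<And>t. t < length ys \<Longrightarrow> ys!t \<notin> G t" using Gsub nth_notin_take dist by blast
  have Gcost: "\<And>t. t \<le> length ys \<Longrightarrow> sum c (G t) \<le> B"
  proof -
    fix t show "t \<le> length ys \<Longrightarrow> sum c (G t) \<le> B"
    proof (induction t)
      case 0 then show ?case using G0 budget by simp
    next
      case (Suc t)
      then have t: "t < length ys" by simp
      show ?case
      proof (cases "c (ys!t) + sum c (G t) \<le> B")
        case True
        then show ?thesis using GSuc[OF t] finG notinG[OF t] by simp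
      next
        case False
        then show ?thesis using GSuc[OF t] Suc by simp
      qed
    qed
  qed
  have g1at: "\<And>t. \<gamma>1 * (f (Ystar \<union> G t) - f (G t)) \<le> (\<Sum>y\<in>Ystar - G t. f (insert y (G t)) - f (G t))"
  proof -
    fix t
    obtain j where j: "j \<le> length L" "G t = set (take j L)" using Gpref by blast
    show "\<gamma>1 * (f (Ystar \<union> G t) - f (G t)) \<le> (\<Sum>y\<in>Ystar - G t. f (insert y (G t)) - f (G t))"
      using g1 opt(1) j unfolding gamma1_ineq_def L_def Let_def by auto
  qed
  have g2at: "\<And>t y. y \<in> M - G t \<Longrightarrow> B < c y + sum c (G t) \<Longrightarrow>
      \<gamma>2 * (f (insert y (G t)) - f (G t)) \<le> f Y1 - f {}"
  proof -
    fix t y assume a: "y \<in> M - G t" "B < c y + sum c (G t)"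
    obtain j where j: "j \<le> length L" "G t = set (take j L)" using Gpref by blast
    show "\<gamma>2 * (f (insert y (G t)) - f (G t)) \<le> f Y1 - f {}"
      using g2 a j unfolding gamma2_ineq_def L_def Let_def by auto
  qed
  have goal_eq: "min \<gamma>2 1 / 2 * (1 - exp (- \<gamma>1)) * f Ystar - ((B + Max (c ` M)) / Min (c ` M) + 1) * \<epsilon>
      = m / 2 * (1 - exp (- \<gamma>1)) * F - (K + 1) * \<epsilon>"
    unfolding m_def F_def K_def cmax_def cmin_def by simp
  have "m * (1 - exp (- \<gamma>1)) \<le> 1" using m01 e01 mult_le_one by blast
  then have coef: "m / 2 * (1 - exp (- \<gamma>1)) \<le> 1" by simp
  show ?thesis
  proof (cases "\<exists>t<length ys. ys!t \<in> Ystar \<and> B < c (ys!t) + sum c (G t)")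
    case False
    have "Ystar \<subseteq> Y2"
    proof
      fix y assume y: "y \<in> Ystar"
      then obtain t where t: "t < length ys" "ys!t = y" using opt(1) setys by (metis in_set_conv_nth subsetD)
      then have "c (ys!t) + sum c (G t) \<le> B" using False y by auto
      then have "y \<in> G (Suc t)" using GSuc[OF t(1)] t by simp
      then show "y \<in> Y2" using GY2 by blast
    qed
    then have "F \<le> f Y2" using monoR Y2M unfolding F_def by blast
    moreover have "m / 2 * (1 - exp (- \<gamma>1)) * F \<le> F" using mult_left_le_one_le[OF F0 _ coef] m01 e01 by simp
    moreover have "0 \<le> K * \<epsilon>" using K0 eps(1) by simp
    moreover have "(K + 1) * \<epsilon> = K * \<epsilon> + \<epsilon>" by (simp add: algebra_simps)
    ultimately show ?thesis unfolding goal_eq using W2 by linarith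
  next
    case True
    define tu where "tu = (LEAST t. t<length ys \<and> ys!t \<in> Ystar \<and> B < c (ys!t) + sum c (G t))"
    have tuP: "tu < length ys \<and> ys!tu \<in> Ystar \<and> B < c (ys!tu) + sum c (G tu)"
      using LeastI_ex[OF True] unfolding tu_def .
    have tuMin: "\<And>s. s < tu \<Longrightarrow> \<not> (s<length ys \<and> ys!s \<in> Ystar \<and> B < c (ys!s) + sum c (G s))"
      using not_less_Least unfolding tu_def by blast
    define u where "u = ys!tu"
    have uM: "u \<in> M" using tuP setys u_def nth_mem by blast
    have finO: "finite Ystar" using opt(1) finM finite_subset by blast
    have "0 < sum c Ystar" using tuP finO cpos opt(1) u_def by (intro sum_pos) auto
    then have Bpos: "0 < B" using opt(2) by simp
    have candO: "\<And>t. t \<le> tu \<Longrightarrow> t < length ys \<Longrightarrow> \<forall>y\<in>Ystar - G t.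
        (fh (insert y (G t)) - fh (G t)) / c y \<le> (fh (insert (ys!t) (G t)) - fh (G t)) / c (ys!t)"
    proof (intro ballI)
      fix t y assume t: "t \<le> tu" "t < length ys" and y: "y \<in> Ystar - G t"
      have yM: "y \<in> M" using y opt(1) by auto
      have "y \<notin> set (take t ys)"
      proof
        assume "y \<in> set (take t ys)"
        then obtain s where s: "s < length (take t ys)" "take t ys ! s = y" by (metis in_set_conv_nth)
        then have s2: "s < t" "s < length ys" "ys ! s = y" by auto
        then have "s < tu" using t by simp
        then have "c (ys!s) + sum c (G s) \<le> B" using tuMin[of s] s2 y by auto
        then have "y \<in> G (Suc s)" using GSuc[OF s2(2)] s2 by simp
        moreover have "G (Suc s) \<subseteq> G t" using Gmono s2 by simp
        ultimately show False using y by blast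
      qed
      then show "(fh (insert y (G t)) - fh (G t)) / c y \<le> (fh (insert (ys!t) (G t)) - fh (G t)) / c (ys!t)"
        using cand[OF t(2)] yM by blast
    qed
    define Inv where "Inv S \<longleftrightarrow> F - f S \<le> exp (- \<gamma>1 * sum c S / B) * F + \<epsilon> * (card S + sum c S / cmin)" for S
    have stepI: "Inv (insert (ys!t) (G t))" if t: "t \<le> tu" "t < length ys" and IH: "Inv (G t)" for t
      unfolding Inv_def F_def
      apply (rule step_lemma[where M=M and fh=fh])
      using finM GM[of t] setys t notinG[of t] opt budget Bpos cmin_pos cmin_le mono eps gn
        candO[OF t] g1at[of t] IH F0 unfolding Inv_def F_def by auto
    have inv: "\<And>t. t \<le> tu \<Longrightarrow> Inv (G t)"
    proof -
      fix t show "t \<le> tu \<Longrightarrow> Inv (G t)"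
      proof (induction t)
        case 0 then show ?case unfolding Inv_def using G0 f0 by simp
      next
        case (Suc t)
        then have t: "t \<le> tu" "t < length ys" using tuP by auto
        have IH: "Inv (G t)" using Suc t by simp
        show ?case
        proof (cases "c (ys!t) + sum c (G t) \<le> B")
          case True
          then show ?thesis using GSuc[OF t(2)] stepI[OF t IH] by simp
        next
          case False
          then show ?thesis using GSuc[OF t(2)] IH by simp
        qed
      qed
    qed
    define G' where "G' = insert u (G tu)"
    have invu: "Inv G'" unfolding G'_def u_def using stepI[of tu] inv[of tu] tuP by simp
    have cG': "sum c G' = c u + sum c (G tu)" unfolding G'_def using finG notinG tuP u_def by simp
    have cG'B: "B < sum c G'" using cG' tuP u_def by simp
    have cG'K: "sum c G' \<le> B + cmax" using cG' Gcost[of tu] tuP cmax_ge uM by force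
    have finG': "finite G'" unfolding G'_def using finG by simp
    have G'M: "G' \<subseteq> M" unfolding G'_def using GM uM by simp
    have "real (card G') * cmin \<le> sum c G'"
      by (rule sum_bounded_below) (use cmin_le G'M in auto)
    then have cardK: "real (card G') \<le> K" unfolding K_def using cG'K cmin_pos
      by (simp add: divide_simps)
    have sK: "sum c G' / cmin \<le> K" unfolding K_def using cG'K cmin_pos by (simp add: divide_right_mono)
    have "- \<gamma>1 * sum c G' / B \<le> - \<gamma>1"
    proof -
      have "1 \<le> sum c G' / B" using cG'B Bpos by simp
      then have "\<gamma>1 * 1 \<le> \<gamma>1 * (sum c G' / B)" using gn by (intro mult_left_mono) auto
      then show ?thesis by simp
    qed
    then have "exp (- \<gamma>1 * sum c G' / B) * F \<le> exp (- \<gamma>1) * F" using F0 by (intro mult_right_mono) auto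
    moreover have "\<epsilon> * (card G' + sum c G' / cmin) \<le> \<epsilon> * (2 * K)"
      using cardK sK eps(1) by (intro mult_left_mono) auto
    ultimately have star: "(1 - exp (- \<gamma>1)) * F - 2 * K * \<epsilon> \<le> f G'"
      using invu unfolding Inv_def by (simp add: algebra_simps)
    define W where "W = max (f Y1) (f Y2)"
    have W0: "0 \<le> W" using fY1 W_def by simp
    have fGtu: "f (G tu) \<le> f Y2" using monoR GY2 Y2M by blast
    have incr: "f (G tu) \<le> f G'" using monoR G'M unfolding G'_def by blast
    have g2u: "\<gamma>2 * (f G' - f (G tu)) \<le> f Y1"
    proof -
      have a: "u \<in> M - G tu" using uM notinG tuP u_def by simp
      have b: "B < c u + sum c (G tu)" using tuP u_def by simp
      show ?thesis using g2at[OF a b] f0 unfolding G'_def by simp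
    qed
    have mW: "m * f G' \<le> 2 * W"
    proof (cases "1 \<le> \<gamma>2")
      case True
      then have "f G' - f (G tu) \<le> \<gamma>2 * (f G' - f (G tu))" using incr
        using mult_right_mono[OF True, of "f G' - f (G tu)"] by simp
      then have "f G' \<le> f Y1 + f Y2" using g2u fGtu by linarith
      moreover have "m = 1" using True m_def by simp
      ultimately show ?thesis using W_def by simp
    next
      case False
      then have mg: "m = \<gamma>2" using m_def by simp
      have "\<gamma>2 * f G' \<le> f Y1 + \<gamma>2 * f (G tu)" using g2u by (simp add: algebra_simps)
      also have "\<dots> \<le> W + \<gamma>2 * W"
      proof -
        have "f Y1 \<le> W" using W_def by simp
        moreover have "\<gamma>2 * f (G tu) \<le> \<gamma>2 * W"
          using fGtu gn(2) W_def by (intro mult_left_mono) auto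
        ultimately show ?thesis by linarith
      qed
      also have "\<dots> \<le> 2 * W" using mult_right_mono[of \<gamma>2 1 W] False W0 by simp
      finally show ?thesis using mg by simp
    qed
    have fYgW: "W - \<epsilon> \<le> f Yg" using W1 W2 W_def by simp
    have "m / 2 * ((1 - exp (- \<gamma>1)) * F - 2 * K * \<epsilon>) \<le> m / 2 * f G'"
      using star m01 by (intro mult_left_mono) auto
    moreover have "m * K * \<epsilon> \<le> K * \<epsilon>"
    proof -
      have "0 \<le> K * \<epsilon>" using K0 eps(1) by simp
      then have "m * (K * \<epsilon>) \<le> K * \<epsilon>" using mult_left_le_one_le m01 by blast
      then show ?thesis by (simp add: mult.assoc)
    qed
    ultimately have "m / 2 * (1 - exp (- \<gamma>1)) * F - K * \<epsilon> \<le> m / 2 * f G'"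
      by (simp add: algebra_simps)
    moreover have "(K + 1) * \<epsilon> = K * \<epsilon> + \<epsilon>" by (simp add: algebra_simps)
    moreover have "m / 2 * f G' \<le> W" using mW by simp
    ultimately show ?thesis unfolding goal_eq using fYgW by linarith
  qed
qed


theorem theorem4:
  fixes n t1 t2 :: nat
    and E :: "(nat \<times> nat) set" and a :: "nat \<Rightarrow> nat \<Rightarrow> real" and h :: real
    and s0 x0 r0 :: "nat \<Rightarrow> real"
    and p :: "real \<times> real \<Rightarrow> real"
    and Nx Nr \<zeta> \<eta> :: "nat \<Rightarrow> nat"
    and c b :: "nat \<Rightarrow> nat \<Rightarrow> real" and B :: real
    and fh :: "meas set \<Rightarrow> real" and \<epsilon> :: real
    and Yg Y1 Ystar :: "meas set" and ys :: "meas list"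
    and \<gamma>1 \<gamma>2 :: real
  defines "M \<equiv> ground_set n t1 t2 \<zeta> \<eta>"
    and "cost \<equiv> meas_cost c b"
    and "Fp \<equiv> prior_fisher p"
    and "H \<equiv> meas_H E a h s0 x0 r0 p Nx Nr"
    and "f \<equiv> f_Pa (prior_fisher p) (meas_H E a h s0 x0 r0 p Nx Nr)"
  assumes n: "n \<ge> 1"
    and graph: "E \<subseteq> {1..n} \<times> {1..n}"
    and weights: "\<forall>i j. 0 \<le> a i j"
    and pdf: "\<forall>\<theta>. 0 \<le> p \<theta>" "integrable lborel p" "integral\<^sup>L lborel p = 1"
    and times: "1 \<le> t1" "t1 \<le> t2"
    and samples: "\<forall>i\<in>{1..n}. 1 \<le> Nx i \<and> 1 \<le> Nr i \<and> 1 \<le> \<zeta> i \<and> 1 \<le> \<eta> i"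
    and costs: "\<forall>i\<in>{1..n}. \<forall>k\<in>{t1..t2}. 0 < c k i \<and> 0 < b k i"
    and budget: "0 \<le> B"
    and H_psd: "\<forall>y\<in>M. psd2 (H y)"
    and Fp_pd: "pd2 Fp"
    and fh0: "fh {} = 0"
    and eps: "0 \<le> \<epsilon>" "\<forall>Y \<subseteq> M. \<bar>fh Y - f Y\<bar> \<le> \<epsilon> / 2"
    and run: "alg2_output fh cost B M Yg Y1 ys"
    and opt: "Ystar \<subseteq> M" "(\<Sum>y\<in>Ystar. cost y) \<le> B"
      "\<forall>Y \<subseteq> M. (\<Sum>y\<in>Y. cost y) \<le> B \<longrightarrow> f Y \<le> f Ystar"
    and g1: "is_gamma1 f M (greedy_added cost B ys) \<gamma>1"
    and g2: "is_gamma2 f cost B M Y1 (greedy_added cost B ys) \<gamma>2"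
    and g_nonneg: "0 \<le> \<gamma>1" "0 \<le> \<gamma>2"
  shows "f Yg \<ge> min \<gamma>2 1 / 2 * (1 - exp (- \<gamma>1)) * f Ystar
            - ((B + Max (cost ` M)) / Min (cost ` M) + 1) * \<epsilon>"
proof -
  have sub: "M \<subseteq> (\<lambda>(i, k, l). MX i k l) ` ({1..n} \<times> {t1..t2} \<times> {1..Max (\<zeta> ` {1..n})})
      \<union> (\<lambda>(i, k, l). MR i k l) ` ({1..n} \<times> {t1..t2} \<times> {1..Max (\<eta> ` {1..n})})"
  proof
    fix y assume "y \<in> M"
    then show "y \<in> (\<lambda>(i, k, l). MX i k l) ` ({1..n} \<times> {t1..t2} \<times> {1..Max (\<zeta> ` {1..n})})
      \<union> (\<lambda>(i, k, l). MR i k l) ` ({1..n} \<times> {t1..t2} \<times> {1..Max (\<eta> ` {1..n})})"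
    proof (unfold M_def ground_set_def, elim UnE CollectE exE conjE)
      fix i k l assume y: "y = MX i k l" and i: "i \<in> {1..n}" and k: "k \<in> {t1..t2}" and l: "l \<in> {1..\<zeta> i}"
      have m: "\<zeta> i \<le> Max (\<zeta> ` {1..n})" using i by simp
      have "l \<le> Max (\<zeta> ` {1..n})" using l m by simp
      then have "(i, k, l) \<in> {1..n} \<times> {t1..t2} \<times> {1..Max (\<zeta> ` {1..n})}" using i k l by simp
      then show ?thesis using y by (intro UnI1 image_eqI[where x="(i, k, l)"]) auto
    next
      fix i k l assume y: "y = MR i k l" and i: "i \<in> {1..n}" and k: "k \<in> {t1..t2}" and l: "l \<in> {1..\<eta> i}"
      have m: "\<eta> i \<le> Max (\<eta> ` {1..n})" using i by simp
      have "l \<le> Max (\<eta> ` {1..n})" using l m by simp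
      then have "(i, k, l) \<in> {1..n} \<times> {t1..t2} \<times> {1..Max (\<eta> ` {1..n})}" using i k l by simp
      then show ?thesis using y by (intro UnI2 image_eqI[where x="(i, k, l)"]) auto
    qed
  qed
  have finM: "finite M" by (rule finite_subset[OF sub]) auto
  have "MX 1 t1 1 \<in> M" unfolding M_def ground_set_def using n times samples by auto
  then have Mne: "M \<noteq> {}" by blast
  have cpos: "\<forall>y\<in>M. 0 < cost y"
    unfolding M_def ground_set_def cost_def meas_cost_def using costs by auto
  have f0: "f {} = 0" unfolding f_def f_Pa_def by simp
  have psdH: "\<And>y. y \<in> M \<Longrightarrow> psd2 (meas_H E a h s0 x0 r0 p Nx Nr y)" using H_psd H_def by simp
  have pdF: "pd2 (prior_fisher p)" using Fp_pd Fp_def by simp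
  have mono: "\<forall>S T. S \<subseteq> T \<and> T \<subseteq> M \<longrightarrow> f S \<le> f T"
  proof (intro allI impI, elim conjE)
    fix S T assume ST: "S \<subseteq> T" and TM: "T \<subseteq> M"
    define HH where "HH = meas_H E a h s0 x0 r0 p Nx Nr"
    define FF where "FF = prior_fisher p"
    have finT: "finite T" using finM TM finite_subset by blast
    have "sum HH T = sum HH (T - S) + sum HH S" using sum.subset_diff[OF ST finT] .
    then have eq: "FF + sum HH T = (FF + sum HH S) + sum HH (T - S)" by (simp add: algebra_simps)
    have A: "pd2 (FF + sum HH S)" unfolding FF_def
      by (rule pd2_add[OF pdF psd2_sum]) (use psdH ST TM HH_def in blast)
    have D: "psd2 (sum HH (T - S))" by (rule psd2_sum) (use psdH ST TM HH_def in blast)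
    have "trace (matrix_inv (FF + sum HH T)) \<le> trace (matrix_inv (FF + sum HH S))"
      unfolding eq by (rule trace_inv_mono[OF A D])
    then show "f S \<le> f T" unfolding f_def f_Pa_def HH_def FF_def by simp
  qed
  have g1': "gamma1_ineq f M (greedy_added cost B ys) \<gamma>1" using g1 is_gamma1_def by blast
  have g2': "gamma2_ineq f cost B M Y1 (greedy_added cost B ys) \<gamma>2" using g2 is_gamma2_def by blast
  show ?thesis
    by (rule abstract_main[OF finM Mne cpos mono f0 budget eps run opt(1) opt(2) g1' g2' g_nonneg])
qed

end
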